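(* Let $0<\lambda<\frac{5-\sqrt{21}}{2}$ and let $K$ be the attractor of the IFS $f_1(x)=\lambda x$, $f_2(x)=\lambda x+2\lambda$, $f_3(x)=\lambda x+3\lambda-\lambda^2$, $f_4(x)=\lambda x+1-\lambda$. For every $k\ge1$, $f_2\circ f_4(U_{2^k})\subseteq U_{2^{k+1}}$.
   Context: A coding of $x\in K$ is a sequence $(i_n)\in\{1,2,3,4\}^{\mathbb{N}}$ with $x=\lim_{n\to\infty}f_{i_1}\circ\cdots\circ f_{i_n}(0)$. $U_k$ denotes the set of $x\in K$ having exactly $k$ distinct codings. *)

theory Defs
  imports "HOL-Analysis.Analysis"
begin

definition ifs_shift :: "real \<Rightarrow> nat \<Rightarrow> real" where
  "ifs_shift l i = (if i = 1 then 0 else if i = 2 then 2 * l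
                    else if i = 3 then 3 * l - l ^ 2 else 1 - l)"

definition ifs_map :: "real \<Rightarrow> nat \<Rightarrow> real \<Rightarrow> real" where
  "ifs_map l i x = l * x + ifs_shift l i"

text \<open>comp_prefix l w n = f_{w 0} o ... o f_{w (n-1)} (sequences indexed from 0).\<close>
fun comp_prefix :: "real \<Rightarrow> (nat \<Rightarrow> nat) \<Rightarrow> nat \<Rightarrow> real \<Rightarrow> real" where
  "comp_prefix l w 0 = id"
| "comp_prefix l w (Suc n) = comp_prefix l w n \<circ> ifs_map l (w n)"

definition is_coding :: "real \<Rightarrow> (nat \<Rightarrow> nat) \<Rightarrow> real \<Rightarrow> bool" where
  "is_coding l w x \<longleftrightarrow> (\<forall>n. w n \<in> {1,2,3,4}) \<and> (\<lambda>n. comp_prefix l w n 0) \<longlonglongrightarrow> x"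

definition codings :: "real \<Rightarrow> real \<Rightarrow> (nat \<Rightarrow> nat) set" where
  "codings l x = {w. is_coding l w x}"

definition attractor :: "real \<Rightarrow> real set" where
  "attractor l = {x. codings l x \<noteq> {}}"

definition U :: "real \<Rightarrow> nat \<Rightarrow> real set" where
  "U l k = {x \<in> attractor l. finite (codings l x) \<and> card (codings l x) = k}"

end

theory Submission
  imports Defs
begin

definition cns :: "nat \<Rightarrow> (nat \<Rightarrow> nat) \<Rightarrow> nat \<Rightarrow> nat" where
  "cns a c = (\<lambda>n. case n of 0 \<Rightarrow> a | Suc m \<Rightarrow> c m)"

lemma cns_shift[simp]: "(\<lambda>i. cns a c (Suc i)) = c" "cns a c 0 = a"
  by (auto simp: cns_def)

lemma cns_eta: "w = cns (w 0) (\<lambda>i. w (Suc i))"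
  by (auto simp: cns_def split: nat.split)

lemma inj_cns: "inj (cns a)"
proof
  fix c d assume "cns a c = cns a d"
  then have "(\<lambda>i. cns a c (Suc i)) = (\<lambda>i. cns a d (Suc i))" by simp
  then show "c = d" by simp
qed

lemma comp_prefix_Suc:
  "comp_prefix l w (Suc n) x = ifs_map l (w 0) (comp_prefix l (\<lambda>i. w (Suc i)) n x)"
  by (induction n arbitrary: x) auto

lemma coding_step:
  assumes "l \<noteq> 0"
  shows "is_coding l w x \<longleftrightarrow> w 0 \<in> {1,2,3,4} \<and>
           is_coding l (\<lambda>i. w (Suc i)) ((x - ifs_shift l (w 0)) / l)"
proof -
  define t where "t = ifs_shift l (w 0)"
  define s where "s = (\<lambda>n. comp_prefix l (\<lambda>i. w (Suc i)) n 0)"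
  have a: "comp_prefix l w (Suc n) 0 = l * s n + t" for n
    unfolding comp_prefix_Suc s_def t_def ifs_map_def by simp
  have all: "(\<forall>n. w n \<in> {1,2,3,4}) \<longleftrightarrow> w 0 \<in> {1,2,3,4} \<and> (\<forall>n. w (Suc n) \<in> {1,2,3,4})"
    by (metis not0_implies_Suc)
  have lim: "(\<lambda>n. comp_prefix l w n 0) \<longlonglongrightarrow> x \<longleftrightarrow> s \<longlonglongrightarrow> (x - t) / l"
  proof -
    have "(\<lambda>n. comp_prefix l w n 0) \<longlonglongrightarrow> x \<longleftrightarrow> (\<lambda>n. l * s n + t) \<longlonglongrightarrow> x"
      using filterlim_sequentially_Suc[of "\<lambda>n. comp_prefix l w n 0" "nhds x"] a by simp
    also have "\<dots> \<longleftrightarrow> s \<longlonglongrightarrow> (x - t) / l"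
    proof
      assume h: "(\<lambda>n. l * s n + t) \<longlonglongrightarrow> x"
      have "(\<lambda>n. ((l * s n + t) - t) / l) \<longlonglongrightarrow> (x - t) / l"
        by (rule tendsto_divide[OF tendsto_diff[OF h tendsto_const] tendsto_const]) (rule assms)
      moreover have "(\<lambda>n. ((l * s n + t) - t) / l) = s" using assms by auto
      ultimately show "s \<longlonglongrightarrow> (x - t) / l" by simp
    next
      assume h: "s \<longlonglongrightarrow> (x - t) / l"
      have "(\<lambda>n. l * s n + t) \<longlonglongrightarrow> l * ((x - t) / l) + t"
        by (intro tendsto_intros h)
      moreover have "l * ((x - t) / l) + t = x" using assms by auto
      ultimately show "(\<lambda>n. l * s n + t) \<longlonglongrightarrow> x" by simp
    qed
    finally show ?thesis .
  qed
  show ?thesis unfolding is_coding_def all lim s_def t_def by auto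
qed

lemma coding_cns:
  assumes "l \<noteq> 0"
  shows "is_coding l (cns a c) x \<longleftrightarrow> a \<in> {1,2,3,4} \<and> is_coding l c ((x - ifs_shift l a) / l)"
  using coding_step[OF assms, of "cns a c" x] by simp

lemma map_01:
  assumes "0 < l" "4 * l \<le> 1" "i \<in> {1,2,3,4}" "0 \<le> z" "z \<le> 1"
  shows "0 \<le> ifs_map l i z \<and> ifs_map l i z \<le> 1"
proof -
  have h: "0 \<le> l * z" "l * z \<le> l" using assms mult_left_le[of z l] by auto
  have "\<forall>v. 0 \<le> v \<and> v \<le> l \<longrightarrow> (0 \<le> v + ifs_shift l i \<and> v + ifs_shift l i \<le> 1)"
    using assms unfolding ifs_shift_def power2_eq_square
    apply auto using zero_le_square[of l] by linarith
  then show ?thesis using h by (simp add: ifs_map_def)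
qed

lemma prefix_01:
  assumes "0 < l" "4 * l \<le> 1" "\<forall>n. w n \<in> {1,2,3,4}"
  shows "0 \<le> comp_prefix l w n 0 \<and> comp_prefix l w n 0 \<le> 1"
  using assms(3)
proof (induction n arbitrary: w)
  case 0 then show ?case by simp
next
  case (Suc n)
  have "0 \<le> comp_prefix l (\<lambda>i. w (Suc i)) n 0 \<and> comp_prefix l (\<lambda>i. w (Suc i)) n 0 \<le> 1"
    using Suc by auto
  then show ?case unfolding comp_prefix_Suc using map_01[OF assms(1,2)] Suc.prems by blast
qed

lemma coding_01:
  assumes "0 < l" "4 * l \<le> 1" "is_coding l w x"
  shows "0 \<le> x \<and> x \<le> 1"
proof -
  have w: "\<forall>n. w n \<in> {1,2,3,4}" and L: "(\<lambda>n. comp_prefix l w n 0) \<longlonglongrightarrow> x"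
    using assms(3) by (auto simp: is_coding_def)
  have "0 \<le> x" by (rule LIMSEQ_le_const[OF L]) (use prefix_01[OF assms(1,2) w] in auto)
  moreover have "x \<le> 1" by (rule LIMSEQ_le_const2[OF L]) (use prefix_01[OF assms(1,2) w] in auto)
  ultimately show ?thesis by simp
qed

theorem lemma2p29:
  fixes l :: real and k :: nat
  assumes "0 < l" and "l < (5 - sqrt 21) / 2" and "k \<ge> 1"
  shows "(ifs_map l 2 \<circ> ifs_map l 4) ` U l (2 ^ k) \<subseteq> U l (2 ^ (k + 1))"
proof
  have l0: "l \<noteq> 0" using assms(1) by simp
  have s21: "sqrt 21 > 4.5"
    by (rule real_less_rsqrt) (simp add: power2_eq_square)
  have sq: "sqrt 21 * sqrt 21 = 21" by simp
  have l4: "4 * l < 1" using assms(2) s21 by simp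
  have key: "4 * l - l * l < 1 - l"
  proof -
    have "(l - (5 - sqrt 21) / 2) * (l - (5 + sqrt 21) / 2) > 0"
      using assms(2) s21 by (intro mult_neg_neg) auto
    moreover have "(l - (5 - sqrt 21) / 2) * (l - (5 + sqrt 21) / 2) = l * l - 5 * l + (25 - sqrt 21 * sqrt 21) / 4"
      by (simp add: algebra_simps add_divide_distrib diff_divide_distrib)
    then have "(l - (5 - sqrt 21) / 2) * (l - (5 + sqrt 21) / 2) = l * l - 5 * l + 1"
      using sq by simp
    ultimately show ?thesis by simp
  qed
  have ll: "l * l < l" using assms(1) l4 by simp
  fix x assume "x \<in> (ifs_map l 2 \<circ> ifs_map l 4) ` U l (2 ^ k)"
  then obtain y where yU: "y \<in> U l (2 ^ k)" and xy: "x = ifs_map l 2 (ifs_map l 4 y)" by auto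
  define C where "C = codings l y"
  have finC: "finite C" and cardC: "card C = 2 ^ k" using yU by (auto simp: U_def C_def)
  then have "C \<noteq> {}" by auto
  then obtain c0 where "is_coding l c0 y" by (auto simp: C_def codings_def)
  then have y01: "0 \<le> y \<and> y \<le> 1" using coding_01 assms(1) l4 by auto
  define u where "u = l * y"
  have u: "0 \<le> u" "u \<le> l" using y01 assms(1) mult_left_le[of y l] by (auto simp: u_def)
  have lu: "0 \<le> l * u" "l * u \<le> l * l" using u assms(1) by (auto intro: mult_left_mono)
  have xu: "x = l * u + 3 * l - l * l" using xy by (simp add: ifs_map_def ifs_shift_def u_def algebra_simps)
  define A where "A = (cns 2 \<circ> cns 4) ` C"
  define B where "B = (cns 3 \<circ> cns 1) ` C"
  have eq: "codings l x = A \<union> B"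
  proof
    show "A \<union> B \<subseteq> codings l x"
    proof
      fix w assume "w \<in> A \<union> B"
      then obtain c where c: "is_coding l c y" and "w = cns 2 (cns 4 c) \<or> w = cns 3 (cns 1 c)"
        by (auto simp: A_def B_def C_def codings_def)
      moreover have "((x - ifs_shift l 2) / l - ifs_shift l 4) / l = y"
        using l0 xy by (simp add: ifs_map_def ifs_shift_def field_simps)
      moreover have "((x - ifs_shift l 3) / l - ifs_shift l 1) / l = y"
        using l0 xy by (simp add: ifs_map_def ifs_shift_def field_simps power2_eq_square)
      ultimately show "w \<in> codings l x"
        by (auto simp: codings_def coding_cns[OF l0])
    qed
  next
    show "codings l x \<subseteq> A \<union> B"
    proof
      fix w assume "w \<in> codings l x"
      then have wc: "is_coding l w x" by (simp add: codings_def)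
      define w2 where "w2 = (\<lambda>i. w (Suc (Suc i)))"
      have weq: "w = cns (w 0) (cns (w 1) w2)"
        unfolding w2_def by (auto simp: cns_def fun_eq_iff split: nat.split)
      define x1 where "x1 = (x - ifs_shift l (w 0)) / l"
      define x2 where "x2 = (x1 - ifs_shift l (w 1)) / l"
      have wc': "is_coding l (cns (w 0) (cns (w 1) w2)) x"
        by (subst weq[symmetric]) (rule wc)
      have h0: "w 0 \<in> {1,2,3,4} \<and> is_coding l (cns (w 1) w2) x1"
        using wc' unfolding coding_cns[OF l0] x1_def .
      then have w0: "w 0 \<in> {1,2,3,4}" and c1: "is_coding l (cns (w 1) w2) x1" by auto
      have "w 1 \<in> {1,2,3,4} \<and> is_coding l w2 x2"
        using c1 unfolding coding_cns[OF l0] x2_def .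
      then have w1: "w 1 \<in> {1,2,3,4}" and c2: "is_coding l w2 x2" by auto
      have x1r: "0 \<le> x1 \<and> x1 \<le> 1" using coding_01[OF assms(1) _ c1] l4 by simp
      have x2r: "0 \<le> x2 \<and> x2 \<le> 1" using coding_01[OF assms(1) _ c2] l4 by simp
      define a where "a = l * x1"
      define b where "b = l * x2"
      have ab: "0 \<le> a" "a \<le> l" "0 \<le> b" "b \<le> l"
        using x1r x2r assms(1) mult_left_le[of x1 l] mult_left_le[of x2 l] by (auto simp: a_def b_def)
      have ea: "x = a + ifs_shift l (w 0)" using l0 by (simp add: x1_def a_def)
      have eb: "x1 = b + ifs_shift l (w 1)" using l0 by (simp add: x2_def b_def)
      have "(w 0 = 2 \<and> w 1 = 4 \<or> w 0 = 3 \<and> w 1 = 1) \<and> x2 = y"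
      proof (cases "w 0 = 2")
        case True
        then have "l * x1 = l * (u + 1 - l)" using ea xu by (simp add: ifs_shift_def a_def algebra_simps)
        then have x1u: "x1 = u + 1 - l" using l0 by simp
        have "w 1 = 4" using w1 eb x1u ab u key l4 by (auto simp: ifs_shift_def power2_eq_square)
        then have "l * x2 = l * y" using eb x1u by (auto simp: ifs_shift_def b_def u_def)
        then show ?thesis using True \<open>w 1 = 4\<close> l0 by auto
      next
        case F2: False
        show ?thesis
        proof (cases "w 0 = 3")
          case True
          then have "l * x1 = l * u" using ea xu by (auto simp: ifs_shift_def a_def power2_eq_square)
          then have x1u: "x1 = u" using l0 by simp
          have "w 1 = 1" using w1 eb x1u ab u ll l4 assms(1) by (auto simp: ifs_shift_def power2_eq_square) (use ll in linarith)+
          then have "l * x2 = l * y" using eb x1u by (auto simp: ifs_shift_def b_def u_def)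
          then show ?thesis using True \<open>w 1 = 1\<close> l0 by simp
        next
          case False
          then have "w 0 = 1 \<or> w 0 = 4" using w0 F2 by auto
          then have False using ea xu ab lu ll l4 by (auto simp: ifs_shift_def)
          then show ?thesis ..
        qed
      qed
      moreover have "w2 \<in> C" using c2 calculation by (simp add: C_def codings_def)
      ultimately have "w = (cns 2 \<circ> cns 4) w2 \<and> w2 \<in> C \<or> w = (cns 3 \<circ> cns 1) w2 \<and> w2 \<in> C"
      proof (elim conjE disjE)
        assume "w 0 = 2" "w 1 = 4" "w2 \<in> C"
        moreover from weq have "w = cns 2 (cns 4 w2)" unfolding \<open>w 0 = 2\<close> \<open>w 1 = 4\<close> .
        ultimately show ?thesis by simp
      next
        assume "w 0 = 3" "w 1 = 1" "w2 \<in> C"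
        moreover from weq have "w = cns 3 (cns 1 w2)" unfolding \<open>w 0 = 3\<close> \<open>w 1 = 1\<close> .
        ultimately show ?thesis by simp
      qed
      then show "w \<in> A \<union> B" unfolding A_def B_def by blast
    qed
  qed
  have dis: "A \<inter> B = {}" by (auto simp: A_def B_def dest!: arg_cong[where f="\<lambda>f. f 0"])
  have injc: "inj (cns a \<circ> cns b)" for a b using inj_cns by (simp add: inj_compose)
  have cA: "card A = 2 ^ k" unfolding A_def using cardC card_image[OF inj_on_subset[OF injc subset_UNIV]]
    by metis
  have cB: "card B = 2 ^ k" unfolding B_def using cardC card_image[OF inj_on_subset[OF injc subset_UNIV]]
    by metis
  have fin: "finite A" "finite B" using finC by (auto simp: A_def B_def)
  have "card (codings l x) = 2 ^ (k + 1)" using eq card_Un_disjoint[OF fin dis] cA cB by simp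
  moreover have "finite (codings l x)" using eq fin by simp
  moreover have "codings l x \<noteq> {}" using calculation by auto
  ultimately show "x \<in> U l (2 ^ (k + 1))" by (simp add: U_def attractor_def)
qed

end
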